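(* Let $\nu\ge 2$, let $n_1,\dots,n_\nu\ge 1$ be integers, $N=\sum_j n_j$, let $\Omega=\coprod_{j=1}^\nu P_j$ with $\#P_j=n_j$, and let $\Delta\{n_j\}\subset\mathbb{C}[S_N]$ and $\Pi$ be as in the context. For $i\ne j$ let $r_{ij}\in S_N$ be a transposition exchanging an element of $P_i$ with an element of $P_j$, let $\mathfrak r_{ij}:=\Pi r_{ij}\Pi$ (which equals $\Xi\big(\sum_{k\ne i,j}n_kE_{kk}+(n_i-1)E_{ii}+(n_j-1)E_{jj}+E_{ij}+E_{ji}\big)$ and in particular does not depend on the choice of $r_{ij}$, and $\mathfrak r_{ij}=\mathfrak r_{ji}$), and let $\tilde{\mathfrak r}_{ij}:=n_in_j\,\mathfrak r_{ij}$. Then $$[\tilde{\mathfrak r}_{ij},\tilde{\mathfrak r}_{jk}+\tilde{\mathfrak r}_{ik}]=0\quad\text{for pairwise distinct } i,j,k,$$ $$[\tilde{\mathfrak r}_{ij},\tilde{\mathfrak r}_{kl}]=0\quad\text{for pairwise distinct } i,j,k,l,$$ where $[x,y]=xy-yx$ in $\Delta\{n_j\}$.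
   Context: $S_N$ is the permutation group of $\Omega$, $Y\{n_j\}$ the subgroup of permutations preserving each $P_j$, $\Pi=\frac{1}{\prod_j n_j!}\sum_{h\in Y\{n_j\}}h$, and $\Delta\{n_j\}=\Pi\,\mathbb{C}[S_N]\,\Pi$. For a $\nu\times\nu$ nonnegative integer matrix $A=\{a_{ij}\}$ with row sums $\sum_j a_{ij}=n_i$ and column sums $\sum_i a_{ij}=n_j$, $\xi(A)$ denotes the double coset $\{g\in S_N:\#(g(P_i)\cap P_j)=a_{ij}\ \forall i,j\}$ and $\Xi(A)=\frac{1}{\#\xi(A)}\sum_{g\in\xi(A)}g$. $E_{ij}$ is the matrix unit with $1$ in position $(i,j)$ and $0$ elsewhere. *)

theory Defs
  imports Complex_Main "HOL-Combinatorics.Combinatorics"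
begin

type_synonym pt = "nat \<times> nat"
type_synonym perm = "pt \<Rightarrow> pt"
type_synonym galg = "perm \<Rightarrow> complex"  (* elements of C[S_N] as coefficient functions *)

definition Pblk :: "(nat \<Rightarrow> nat) \<Rightarrow> nat \<Rightarrow> pt set" where
  "Pblk n j = {j} \<times> {..<n j}"

definition Omega :: "nat \<Rightarrow> (nat \<Rightarrow> nat) \<Rightarrow> pt set" where
  "Omega nu n = (\<Union>j<nu. Pblk n j)"

definition SN :: "nat \<Rightarrow> (nat \<Rightarrow> nat) \<Rightarrow> perm set" where
  "SN nu n = {p. p permutes Omega nu n}"

text \<open>Product in the group algebra, with (g h)(x) = g (h x).\<close>
definition gmult :: "nat \<Rightarrow> (nat \<Rightarrow> nat) \<Rightarrow> galg \<Rightarrow> galg \<Rightarrow> galg" where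
  "gmult nu n x y = (\<lambda>g. \<Sum>h\<in>SN nu n. x h * y (inv h \<circ> g))"

definition gbasis :: "perm \<Rightarrow> galg" where
  "gbasis g = (\<lambda>h. if h = g then 1 else 0)"

definition Ysub :: "nat \<Rightarrow> (nat \<Rightarrow> nat) \<Rightarrow> perm set" where
  "Ysub nu n = {h \<in> SN nu n. \<forall>j<nu. h ` Pblk n j = Pblk n j}"

definition PiY :: "nat \<Rightarrow> (nat \<Rightarrow> nat) \<Rightarrow> galg" where
  "PiY nu n = (\<lambda>h. if h \<in> Ysub nu n then 1 / (\<Prod>j<nu. of_nat (fact (n j))) else 0)"

definition rfrak :: "nat \<Rightarrow> (nat \<Rightarrow> nat) \<Rightarrow> pt \<Rightarrow> pt \<Rightarrow> galg" where
  "rfrak nu n a b = gmult nu n (gmult nu n (PiY nu n) (gbasis (transpose a b))) (PiY nu n)"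

text \<open>rtil for blocks i, j using the transposition exchanging a (in P i) and b (in P j).\<close>
definition rtil :: "nat \<Rightarrow> (nat \<Rightarrow> nat) \<Rightarrow> nat \<Rightarrow> nat \<Rightarrow> pt \<Rightarrow> pt \<Rightarrow> galg" where
  "rtil nu n i j a b = (\<lambda>g. of_nat (n i * n j) * rfrak nu n a b g)"

definition gadd :: "galg \<Rightarrow> galg \<Rightarrow> galg" where
  "gadd x y = (\<lambda>g. x g + y g)"

definition gcomm :: "nat \<Rightarrow> (nat \<Rightarrow> nat) \<Rightarrow> galg \<Rightarrow> galg \<Rightarrow> galg" where
  "gcomm nu n x y = (\<lambda>g. gmult nu n x y g - gmult nu n y x g)"

end

theory Submission
  imports Defs
begin

definition smul :: "complex \<Rightarrow> galg \<Rightarrow> galg" where "smul k x = (\<lambda>g. k * x g)"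
definition gsum :: "'a set \<Rightarrow> ('a \<Rightarrow> galg) \<Rightarrow> galg" where "gsum A f = (\<lambda>g. \<Sum>p\<in>A. f p g)"
definition tr :: "pt \<times> pt \<Rightarrow> perm" where "tr p = transpose (fst p) (snd p)"
definition rho :: "(pt \<times> pt) set \<Rightarrow> galg" where "rho A = gsum A (\<lambda>p. gbasis (tr p))"
definition EY :: "nat \<Rightarrow> (nat \<Rightarrow> nat) \<Rightarrow> galg" where "EY nu n = gsum (Ysub nu n) gbasis"

lemma finite_Omega: "finite (Omega nu n)"
  unfolding Omega_def Pblk_def by auto

lemma finite_SN: "finite (SN nu n)"
  unfolding SN_def using finite_permutations[OF finite_Omega] .

lemma SN_comp: "p \<in> SN nu n \<Longrightarrow> q \<in> SN nu n \<Longrightarrow> p \<circ> q \<in> SN nu n"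
  unfolding SN_def by (auto intro: permutes_compose)
lemma SN_inv: "p \<in> SN nu n \<Longrightarrow> inv p \<in> SN nu n"
  unfolding SN_def by (auto intro: permutes_inv)
lemma SN_bij: "p \<in> SN nu n \<Longrightarrow> bij p"
  unfolding SN_def by (auto intro: permutes_bij)
lemma SN_inv_o: "p \<in> SN nu n \<Longrightarrow> p \<circ> inv p = id"  "p \<in> SN nu n \<Longrightarrow> inv p \<circ> p = id"
  unfolding SN_def by (auto intro: permutes_inv_o)

lemma gmult_assoc: "gmult nu n (gmult nu n x y) z = gmult nu n x (gmult nu n y z)"
proof
  fix g
  let ?S = "SN nu n"
  have r: "(\<Sum>h\<in>?S. y h * z (inv h \<circ> (inv k \<circ> g))) = (\<Sum>h\<in>?S. y (inv k \<circ> h) * z (inv h \<circ> g))"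
    if k: "k \<in> ?S" for k
  proof (rule sum.reindex_bij_witness[where i="\<lambda>h. inv k \<circ> h" and j="\<lambda>h. k \<circ> h"])
    fix a assume a: "a \<in> ?S"
    show "inv k \<circ> (k \<circ> a) = a" using SN_inv_o[OF k] by (simp add: o_assoc)
    show "k \<circ> a \<in> ?S" using a k by (rule SN_comp[rotated])
    have "inv (k \<circ> a) = inv a \<circ> inv k" using SN_bij[OF k] SN_bij[OF a] by (simp add: o_inv_distrib)
    then show "y (inv k \<circ> (k \<circ> a)) * z (inv (k \<circ> a) \<circ> g) = y a * z (inv a \<circ> (inv k \<circ> g))"
      using SN_inv_o[OF k] by (simp add: o_assoc)
  next
    fix b assume b: "b \<in> ?S"
    show "k \<circ> (inv k \<circ> b) = b" using SN_inv_o[OF k] by (simp add: o_assoc)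
    show "inv k \<circ> b \<in> ?S" using b SN_inv[OF k] by (rule SN_comp[rotated])
  qed
  have "gmult nu n x (gmult nu n y z) g = (\<Sum>k\<in>?S. x k * (\<Sum>h\<in>?S. y (inv k \<circ> h) * z (inv h \<circ> g)))"
    unfolding gmult_def using r by simp
  also have "\<dots> = (\<Sum>k\<in>?S. \<Sum>h\<in>?S. x k * y (inv k \<circ> h) * z (inv h \<circ> g))"
    by (simp add: sum_distrib_left mult.assoc)
  also have "\<dots> = (\<Sum>h\<in>?S. \<Sum>k\<in>?S. x k * y (inv k \<circ> h) * z (inv h \<circ> g))"
    by (rule sum.swap)
  also have "\<dots> = gmult nu n (gmult nu n x y) z g"
    unfolding gmult_def by (simp add: sum_distrib_right)
  finally show "gmult nu n (gmult nu n x y) z g = gmult nu n x (gmult nu n y z) g" ..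
qed

lemma gmult_gsum_left: "gmult nu n (gsum A f) y = gsum A (\<lambda>p. gmult nu n (f p) y)"
  unfolding gmult_def gsum_def by (auto simp: fun_eq_iff sum_distrib_right intro: sum.swap)

lemma gmult_gsum_right: "gmult nu n x (gsum A f) = gsum A (\<lambda>p. gmult nu n x (f p))"
  unfolding gmult_def gsum_def by (auto simp: fun_eq_iff sum_distrib_left intro: sum.swap)

lemma gmult_smul_left: "gmult nu n (smul k x) y = smul k (gmult nu n x y)"
  unfolding gmult_def smul_def by (auto simp: fun_eq_iff sum_distrib_left mult.assoc)

lemma gmult_smul_right: "gmult nu n x (smul k y) = smul k (gmult nu n x y)"
  unfolding gmult_def smul_def by (auto simp: fun_eq_iff sum_distrib_left mult.assoc mult.left_commute)

lemma gmult_gadd_left: "gmult nu n (gadd x y) z = gadd (gmult nu n x z) (gmult nu n y z)"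
  unfolding gmult_def gadd_def by (auto simp: fun_eq_iff sum.distrib ring_distribs)

lemma gmult_gadd_right: "gmult nu n z (gadd x y) = gadd (gmult nu n z x) (gmult nu n z y)"
  unfolding gmult_def gadd_def by (auto simp: fun_eq_iff sum.distrib ring_distribs)

lemma gmult_basis_left: "s \<in> SN nu n \<Longrightarrow> gmult nu n (gbasis s) y = (\<lambda>g. y (inv s \<circ> g))"
proof -
  assume s: "s \<in> SN nu n"
  have d: "(\<Sum>h\<in>SN nu n. (if h = s then 1 else 0) * f h) = f s" for f :: "perm \<Rightarrow> complex"
  proof -
    have "(\<Sum>h\<in>SN nu n. (if h = s then 1 else 0) * f h) = (\<Sum>h\<in>SN nu n. (if h = s then f h else 0))"
      by (rule sum.cong) auto
    also have "\<dots> = f s" using s finite_SN by (simp add: sum.delta)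
    finally show ?thesis .
  qed
  show ?thesis unfolding gmult_def gbasis_def by (rule ext) (rule d)
qed

lemma gmult_basis: "s \<in> SN nu n \<Longrightarrow> gmult nu n (gbasis s) (gbasis t) = gbasis (s \<circ> t)"
proof -
  assume s: "s \<in> SN nu n"
  have e: "(inv s \<circ> g = t) = (g = s \<circ> t)" for g
  proof
    assume "inv s \<circ> g = t"
    then have "s \<circ> (inv s \<circ> g) = s \<circ> t" by simp
    then show "g = s \<circ> t" using SN_inv_o[OF s] by (simp add: o_assoc)
  next
    assume "g = s \<circ> t" then show "inv s \<circ> g = t" using SN_inv_o[OF s] by (simp add: o_assoc)
  qed
  show ?thesis unfolding gmult_basis_left[OF s] unfolding gbasis_def by (rule ext) (simp only: e)
qed

lemma Y_SN: "Ysub nu n \<subseteq> SN nu n" unfolding Ysub_def by auto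
lemma finite_Y: "finite (Ysub nu n)" using finite_subset[OF Y_SN finite_SN] .
lemma Y_comp: "p \<in> Ysub nu n \<Longrightarrow> q \<in> Ysub nu n \<Longrightarrow> p \<circ> q \<in> Ysub nu n"
proof -
  assume p: "p \<in> Ysub nu n" and q: "q \<in> Ysub nu n"
  have "(p \<circ> q) ` Pblk n j = Pblk n j" if "j < nu" for j
    using p q that unfolding Ysub_def image_comp[symmetric] by simp
  then show ?thesis using p q SN_comp unfolding Ysub_def by auto
qed
lemma Y_inv: "p \<in> Ysub nu n \<Longrightarrow> inv p \<in> Ysub nu n"
proof -
  assume p: "p \<in> Ysub nu n"
  then have ps: "p \<in> SN nu n" and im: "\<forall>j<nu. p ` Pblk n j = Pblk n j" unfolding Ysub_def by auto
  have "inv p ` Pblk n j = Pblk n j" if "j < nu" for j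
    using image_inv_f_f[OF bij_is_inj[OF SN_bij[OF ps]], of "Pblk n j"] im that by simp
  then show ?thesis using SN_inv[OF ps] unfolding Ysub_def by auto
qed

lemma gsum_cong: "(\<And>p. p \<in> A \<Longrightarrow> f p = g p) \<Longrightarrow> gsum A f = gsum A g"
  unfolding gsum_def by (auto intro!: sum.cong)

lemma EY_right: "u \<in> Ysub nu n \<Longrightarrow> gmult nu n (EY nu n) (gbasis u) = EY nu n"
proof -
  assume u: "u \<in> Ysub nu n"
  have us: "u \<in> SN nu n" using u Y_SN by auto
  have "gmult nu n (EY nu n) (gbasis u) = gsum (Ysub nu n) (\<lambda>v. gbasis (v \<circ> u))"
    unfolding EY_def gmult_gsum_left by (rule gsum_cong) (use Y_SN in \<open>auto intro: gmult_basis\<close>)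
  also have "\<dots> = EY nu n" unfolding EY_def gsum_def
  proof (rule ext, rule sum.reindex_bij_witness[where j="\<lambda>v. v \<circ> u" and i="\<lambda>v. v \<circ> inv u"])
    fix a assume a: "a \<in> Ysub nu n"
    show "a \<circ> u \<circ> inv u = a" using SN_inv_o[OF us] by (simp add: o_assoc[symmetric])
    show "a \<circ> u \<in> Ysub nu n" using a u by (rule Y_comp)
  next
    fix b assume b: "b \<in> Ysub nu n"
    show "b \<circ> inv u \<circ> u = b" using SN_inv_o[OF us] by (simp add: o_assoc[symmetric])
    show "b \<circ> inv u \<in> Ysub nu n" using b Y_inv[OF u] by (rule Y_comp)
  qed simp
  finally show ?thesis .
qed

lemma EY_left: "u \<in> Ysub nu n \<Longrightarrow> gmult nu n (gbasis u) (EY nu n) = EY nu n"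
proof -
  assume u: "u \<in> Ysub nu n"
  have us: "u \<in> SN nu n" using u Y_SN by auto
  have "gmult nu n (gbasis u) (EY nu n) = gsum (Ysub nu n) (\<lambda>v. gbasis (u \<circ> v))"
    unfolding EY_def gmult_gsum_right by (rule gsum_cong) (use us in \<open>auto intro: gmult_basis\<close>)
  also have "\<dots> = EY nu n" unfolding EY_def gsum_def
  proof (rule ext, rule sum.reindex_bij_witness[where j="\<lambda>v. u \<circ> v" and i="\<lambda>v. inv u \<circ> v"])
    fix a assume a: "a \<in> Ysub nu n"
    show "inv u \<circ> (u \<circ> a) = a" using SN_inv_o[OF us] by (simp add: o_assoc)
    show "u \<circ> a \<in> Ysub nu n" using u a by (rule Y_comp)
  next
    fix b assume b: "b \<in> Ysub nu n"
    show "u \<circ> (inv u \<circ> b) = b" using SN_inv_o[OF us] by (simp add: o_assoc)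
    show "inv u \<circ> b \<in> Ysub nu n" using Y_inv[OF u] b by (rule Y_comp)
  qed simp
  finally show ?thesis .
qed

lemma tr_SN: "fst p \<in> Omega nu n \<Longrightarrow> snd p \<in> Omega nu n \<Longrightarrow> tr p \<in> SN nu n"
  unfolding tr_def SN_def by (auto intro: permutes_swap_id)

definition stable :: "nat \<Rightarrow> (nat \<Rightarrow> nat) \<Rightarrow> (pt \<times> pt) set \<Rightarrow> bool" where
  "stable nu n A = (A \<subseteq> Omega nu n \<times> Omega nu n \<and> (\<forall>u\<in>Ysub nu n. \<forall>p\<in>A. (u (fst p), u (snd p)) \<in> A))"

lemma rho_conj:
  assumes st: "stable nu n A" and u: "u \<in> Ysub nu n"
  shows "gmult nu n (gbasis u) (rho A) = gmult nu n (rho A) (gbasis u)"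
proof -
  have us: "u \<in> SN nu n" using u Y_SN by auto
  have AO: "A \<subseteq> Omega nu n \<times> Omega nu n" using st unfolding stable_def by auto
  have trA: "p \<in> A \<Longrightarrow> tr p \<in> SN nu n" for p using AO by (intro tr_SN) auto
  have L: "gmult nu n (gbasis u) (rho A) = gsum A (\<lambda>p. gbasis (u \<circ> tr p))"
    unfolding rho_def gmult_gsum_right by (rule gsum_cong) (use us in \<open>auto intro: gmult_basis\<close>)
  have R: "gmult nu n (rho A) (gbasis u) = gsum A (\<lambda>p. gbasis (tr p \<circ> u))"
    unfolding rho_def gmult_gsum_left by (rule gsum_cong) (use trA in \<open>auto intro: gmult_basis\<close>)
  have bu: "bij u" using SN_bij[OF us] .
  have iuu: "inv u (u x) = x" for x using bu by (simp add: bij_is_inj)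
  have uiu: "u (inv u x) = x" for x using bu by (simp add: bij_is_surj surj_f_inv_f)
  have id: "u \<circ> tr p = tr (u (fst p), u (snd p)) \<circ> u" for p
    using transpose_comp_eq[OF bu, of "u (fst p)" "u (snd p)"] by (simp add: tr_def iuu)
  have "gsum A (\<lambda>p. gbasis (u \<circ> tr p)) = gsum A (\<lambda>p. gbasis (tr p \<circ> u))"
    unfolding gsum_def id
  proof (rule ext, rule sum.reindex_bij_witness[where j="\<lambda>p. (u (fst p), u (snd p))" and i="\<lambda>p. (inv u (fst p), inv u (snd p))"])
    fix a assume a: "a \<in> A"
    show "(inv u (fst (u (fst a), u (snd a))), inv u (snd (u (fst a), u (snd a)))) = a" by (simp add: iuu)
    show "(u (fst a), u (snd a)) \<in> A" using st u a unfolding stable_def by auto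
  next
    fix b assume b: "b \<in> A"
    show "(u (fst (inv u (fst b), inv u (snd b))), u (snd (inv u (fst b), inv u (snd b)))) = b" by (simp add: uiu)
    show "(inv u (fst b), inv u (snd b)) \<in> A" using st Y_inv[OF u] b unfolding stable_def by auto
  qed simp
  then show ?thesis using L R by simp
qed

lemma EY_rho: "stable nu n A \<Longrightarrow> gmult nu n (EY nu n) (rho A) = gmult nu n (rho A) (EY nu n)"
  unfolding EY_def gmult_gsum_left gmult_gsum_right by (rule gsum_cong) (rule rho_conj)

lemma tr_conj: "c \<noteq> a \<Longrightarrow> c \<noteq> b \<Longrightarrow> transpose a b \<circ> transpose x c = transpose (transpose a b x) c \<circ> transpose a b"
  by (auto simp: fun_eq_iff transpose_def)

lemma rho_comm:
  assumes AO: "A \<subseteq> Omega nu n \<times> Omega nu n" and BO: "B \<subseteq> Omega nu n \<times> Omega nu n"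
    and c: "\<And>p q. p \<in> A \<Longrightarrow> q \<in> B \<Longrightarrow> snd q \<noteq> fst p \<and> snd q \<noteq> snd p \<and> (tr p (fst q), snd q) \<in> B"
  shows "gmult nu n (rho A) (rho B) = gmult nu n (rho B) (rho A)"
proof -
  have trA: "p \<in> A \<Longrightarrow> tr p \<in> SN nu n" for p using AO by (intro tr_SN) auto
  have trB: "p \<in> B \<Longrightarrow> tr p \<in> SN nu n" for p using BO by (intro tr_SN) auto
  have L: "gmult nu n (rho A) (rho B) = gsum A (\<lambda>p. gsum B (\<lambda>q. gbasis (tr p \<circ> tr q)))"
    unfolding rho_def gmult_gsum_left unfolding gmult_gsum_right
    by (rule gsum_cong, rule gsum_cong) (use trA in \<open>auto intro: gmult_basis\<close>)
  have R: "gmult nu n (rho B) (rho A) = gsum B (\<lambda>q. gsum A (\<lambda>p. gbasis (tr q \<circ> tr p)))"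
    unfolding rho_def gmult_gsum_left unfolding gmult_gsum_right
    by (rule gsum_cong, rule gsum_cong) (use trB in \<open>auto intro: gmult_basis\<close>)
  have inner: "(\<Sum>q\<in>B. gbasis (tr p \<circ> tr q) x) = (\<Sum>q\<in>B. gbasis (tr q \<circ> tr p) x)" if p: "p \<in> A" for p x
  proof -
    have "(\<Sum>q\<in>B. gbasis (tr p \<circ> tr q) x) = (\<Sum>q\<in>B. gbasis (tr (tr p (fst q), snd q) \<circ> tr p) x)"
      by (rule sum.cong) (use c[OF p] in \<open>auto simp: tr_def intro!: arg_cong[where f="\<lambda>t. gbasis t x"] tr_conj\<close>)
    also have "\<dots> = (\<Sum>q\<in>B. gbasis (tr q \<circ> tr p) x)"
    proof (rule sum.reindex_bij_witness[where j="\<lambda>q. (tr p (fst q), snd q)" and i="\<lambda>q. (tr p (fst q), snd q)"])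
      fix a assume a: "a \<in> B"
      show "(tr p (fst (tr p (fst a), snd a)), snd (tr p (fst a), snd a)) = a" by (simp add: tr_def)
      show "(tr p (fst a), snd a) \<in> B" using c[OF p a] by simp
    next
      fix b assume b: "b \<in> B"
      show "(tr p (fst (tr p (fst b), snd b)), snd (tr p (fst b), snd b)) = b" by (simp add: tr_def)
      show "(tr p (fst b), snd b) \<in> B" using c[OF p b] by simp
    qed simp
    finally show ?thesis .
  qed
  show ?thesis unfolding L R gsum_def
    by (rule ext) (simp add: inner cong: sum.cong, rule sum.swap)
qed

lemma abs_comm:
  assumes assoc: "\<And>x y z. m (m x y) z = m x (m y z)"
    and er: "m E r = m r E" and es: "m E s = m s E" and rs: "m r s = m s r"
  shows "m (m (m E r) E) (m (m E s) E) = m (m (m E s) E) (m (m E r) E)"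
proof -
  have key: "m (m (m E r) E) (m (m E s) E) = m r (m s (m E (m E (m E E))))"
    if er: "m E r = m r E" and es: "m E s = m s E" for r s
  proof -
    have er': "m E (m r X) = m r (m E X)" for X by (metis assoc er)
    have es': "m E (m s X) = m s (m E X)" for X by (metis assoc es)
    show ?thesis by (simp add: assoc er' es' er es)
  qed
  have rs': "m r (m s X) = m s (m r X)" for X by (metis assoc rs)
  show ?thesis using key[OF er es] key[OF es er] rs' by simp
qed

lemma Pblk_Omega: "j < nu \<Longrightarrow> Pblk n j \<subseteq> Omega nu n"
  unfolding Omega_def by auto

lemma Pblk_fst: "x \<in> Pblk n j \<Longrightarrow> fst x = j"
  unfolding Pblk_def by auto

lemma Y_block: "u \<in> Ysub nu n \<Longrightarrow> j < nu \<Longrightarrow> x \<in> Pblk n j \<Longrightarrow> u x \<in> Pblk n j"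
  unfolding Ysub_def by blast

lemma stable_prod: "i < nu \<Longrightarrow> j < nu \<Longrightarrow> stable nu n (Pblk n i \<times> Pblk n j)"
  unfolding stable_def using Pblk_Omega[of i nu n] Pblk_Omega[of j nu n] Y_block[of _ nu n]
  by auto

lemma transp_Y:
  assumes i: "i < nu" and a: "a \<in> Pblk n i" and a0: "a0 \<in> Pblk n i"
  shows "transpose a a0 \<in> Ysub nu n"
proof -
  have "transpose a a0 permutes Omega nu n"
    using a a0 Pblk_Omega[OF i] by (intro permutes_swap_id) auto
  moreover have "transpose a a0 ` Pblk n j = Pblk n j" for j
    using a a0 Pblk_fst[of a n] Pblk_fst[of a0 n] unfolding Pblk_def
    by (intro transpose_image_eq) auto
  ultimately show ?thesis unfolding Ysub_def SN_def by auto
qed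

lemma K1:
  assumes i: "i < nu" and j: "j < nu" and ij: "i \<noteq> j"
    and a: "a \<in> Pblk n i" and a0: "a0 \<in> Pblk n i" and b: "b \<in> Pblk n j" and b0: "b0 \<in> Pblk n j"
  shows "gmult nu n (gmult nu n (EY nu n) (gbasis (transpose a b))) (EY nu n)
       = gmult nu n (gmult nu n (EY nu n) (gbasis (transpose a0 b0))) (EY nu n)"
proof -
  let ?M = "gmult nu n" and ?E = "EY nu n"
  define u where "u = transpose a a0 \<circ> transpose b b0"
  have uY: "u \<in> Ysub nu n" unfolding u_def by (rule Y_comp; rule transp_Y) (use assms in auto)
  have us: "u \<in> SN nu n" using uY Y_SN by auto
  have tS: "transpose a b \<in> SN nu n" "transpose a0 b0 \<in> SN nu n"
    using a b a0 b0 Pblk_Omega[OF i] Pblk_Omega[OF j] unfolding SN_def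
    by (auto intro!: permutes_swap_id)
  have fa: "fst a = i" "fst a0 = i" "fst b = j" "fst b0 = j"
    using a a0 b b0 by (auto dest: Pblk_fst)
  have ne: "a0 \<noteq> b" "a0 \<noteq> b0" "b \<noteq> a" "b \<noteq> a0" using fa ij by auto
  have ua0: "u a0 = a" unfolding u_def using ne by (simp add: transpose_def)
  have ub0: "u b0 = b" unfolding u_def using ne by (simp add: transpose_def)
  have bu: "bij u" using SN_bij[OF us] .
  have iu: "inv u a = a0" "inv u b = b0"
    using ua0 ub0 bu by (auto simp: bij_is_inj inv_f_eq)
  have comm: "transpose a b \<circ> u = u \<circ> transpose a0 b0"
    using transpose_comp_eq[OF bu, of a b] iu by simp
  have "?M (?M ?E (gbasis (transpose a b))) ?E = ?M (?M ?E (gbasis (transpose a b))) (?M (gbasis u) ?E)"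
    using EY_left[OF uY] by simp
  also have "\<dots> = ?M (?M ?E (?M (gbasis (transpose a b)) (gbasis u))) ?E"
    by (simp only: gmult_assoc)
  also have "\<dots> = ?M (?M ?E (?M (gbasis u) (gbasis (transpose a0 b0)))) ?E"
    using gmult_basis[OF tS(1), of u] gmult_basis[OF us, of "transpose a0 b0"] comm by simp
  also have "\<dots> = ?M (?M (?M ?E (gbasis u)) (gbasis (transpose a0 b0))) ?E"
    by (simp only: gmult_assoc)
  also have "\<dots> = ?M (?M ?E (gbasis (transpose a0 b0))) ?E"
    using EY_right[OF uY] by simp
  finally show ?thesis .
qed

lemma card_Pblk: "card (Pblk n i) = n i"
  unfolding Pblk_def by (simp add: card_cartesian_product)

lemma gsum_const: "gsum A (\<lambda>_. X) = smul (of_nat (card A)) X"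
  unfolding gsum_def smul_def by simp

lemma K2:
  assumes i: "i < nu" and j: "j < nu" and ij: "i \<noteq> j"
    and a0: "a0 \<in> Pblk n i" and b0: "b0 \<in> Pblk n j"
  shows "gmult nu n (gmult nu n (EY nu n) (rho (Pblk n i \<times> Pblk n j))) (EY nu n)
       = smul (of_nat (n i * n j)) (gmult nu n (gmult nu n (EY nu n) (gbasis (transpose a0 b0))) (EY nu n))"
proof -
  have "gmult nu n (gmult nu n (EY nu n) (rho (Pblk n i \<times> Pblk n j))) (EY nu n)
    = gsum (Pblk n i \<times> Pblk n j) (\<lambda>p. gmult nu n (gmult nu n (EY nu n) (gbasis (transpose (fst p) (snd p)))) (EY nu n))"
    unfolding rho_def gmult_gsum_right unfolding gmult_gsum_left tr_def ..
  also have "\<dots> = gsum (Pblk n i \<times> Pblk n j) (\<lambda>p. gmult nu n (gmult nu n (EY nu n) (gbasis (transpose a0 b0))) (EY nu n))"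
    by (rule gsum_cong) (use assms in \<open>auto intro: K1\<close>)
  also have "\<dots> = smul (of_nat (n i * n j)) (gmult nu n (gmult nu n (EY nu n) (gbasis (transpose a0 b0))) (EY nu n))"
    unfolding gsum_const by (simp add: card_cartesian_product card_Pblk)
  finally show ?thesis .
qed

lemma PiY_EY: "PiY nu n = smul (1 / (\<Prod>j<nu. of_nat (fact (n j)))) (EY nu n)"
proof (rule ext)
  fix g
  have "EY nu n g = (if g \<in> Ysub nu n then 1 else 0)"
    unfolding EY_def gsum_def gbasis_def using finite_Y by (simp add: sum.delta')
  then show "PiY nu n g = smul (1 / (\<Prod>j<nu. of_nat (fact (n j)))) (EY nu n) g"
    unfolding PiY_def smul_def by simp
qed

lemma smul_smul: "smul a (smul b x) = smul (a * b) x"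
  unfolding smul_def by (simp add: mult.assoc)

lemma rtil_eq:
  assumes i: "i < nu" and j: "j < nu" and ij: "i \<noteq> j"
    and a0: "a0 \<in> Pblk n i" and b0: "b0 \<in> Pblk n j"
  shows "rtil nu n i j a0 b0 = smul ((1 / (\<Prod>j<nu. of_nat (fact (n j)))) * (1 / (\<Prod>j<nu. of_nat (fact (n j)))))
          (gmult nu n (gmult nu n (EY nu n) (rho (Pblk n i \<times> Pblk n j))) (EY nu n))"
  unfolding K2[OF assms] rtil_def rfrak_def PiY_EY gmult_smul_left gmult_smul_right smul_smul
  by (simp add: smul_def mult_ac)

lemma gcomm_zero:
  assumes "gmult nu n X Z = gmult nu n Z X"
  shows "gcomm nu n (smul k X) (smul k Z) = (\<lambda>_. 0)"
  unfolding gcomm_def gmult_smul_left gmult_smul_right assms by (simp add: smul_def)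

lemma gadd_smul: "gadd (smul k x) (smul k y) = smul k (gadd x y)"
  unfolding gadd_def smul_def by (simp add: ring_distribs)

lemma rho_union: "finite A1 \<Longrightarrow> finite A2 \<Longrightarrow> A1 \<inter> A2 = {} \<Longrightarrow> rho (A1 \<union> A2) = gadd (rho A1) (rho A2)"
  unfolding rho_def gsum_def gadd_def by (simp add: sum.union_disjoint)

lemma X_comm:
  assumes A: "stable nu n A" and B: "stable nu n B"
    and c: "\<And>p q. p \<in> A \<Longrightarrow> q \<in> B \<Longrightarrow> snd q \<noteq> fst p \<and> snd q \<noteq> snd p \<and> (tr p (fst q), snd q) \<in> B"
  shows "gmult nu n (gmult nu n (gmult nu n (EY nu n) (rho A)) (EY nu n)) (gmult nu n (gmult nu n (EY nu n) (rho B)) (EY nu n))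
       = gmult nu n (gmult nu n (gmult nu n (EY nu n) (rho B)) (EY nu n)) (gmult nu n (gmult nu n (EY nu n) (rho A)) (EY nu n))"
  by (rule abs_comm[where m="gmult nu n"], rule gmult_assoc, rule EY_rho[OF A], rule EY_rho[OF B],
      rule rho_comm[OF _ _ c]) (use A B in \<open>auto simp: stable_def\<close>)

theorem theorem2:
  fixes nu :: nat and n :: "nat \<Rightarrow> nat" and c :: "nat \<Rightarrow> nat \<Rightarrow> pt \<times> pt"
  assumes "nu \<ge> 2"
    and "\<forall>j<nu. n j \<ge> 1"
    and "\<forall>i<nu. \<forall>j<nu. i \<noteq> j \<longrightarrow> fst (c i j) \<in> Pblk n i \<and> snd (c i j) \<in> Pblk n j"
  shows "(\<forall>i j k. i < nu \<and> j < nu \<and> k < nu \<and> i \<noteq> j \<and> j \<noteq> k \<and> i \<noteq> k \<longrightarrow>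
            gcomm nu n (rtil nu n i j (fst (c i j)) (snd (c i j)))
              (gadd (rtil nu n j k (fst (c j k)) (snd (c j k)))
                    (rtil nu n i k (fst (c i k)) (snd (c i k)))) = (\<lambda>_. 0))
       \<and> (\<forall>i j k l. i < nu \<and> j < nu \<and> k < nu \<and> l < nu \<and> distinct [i, j, k, l] \<longrightarrow>
            gcomm nu n (rtil nu n i j (fst (c i j)) (snd (c i j)))
              (rtil nu n k l (fst (c k l)) (snd (c k l))) = (\<lambda>_. 0))"
proof (intro conjI allI impI)
  fix i j k assume h: "i < nu \<and> j < nu \<and> k < nu \<and> i \<noteq> j \<and> j \<noteq> k \<and> i \<noteq> k"
  let ?E = "EY nu n" and ?M = "gmult nu n"
  let ?K = "(1 / (\<Prod>j<nu. of_nat (fact (n j)))) * (1 / (\<Prod>j<nu. of_nat (fact (n j))))"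
  define B where "B = Pblk n j \<times> Pblk n k \<union> Pblk n i \<times> Pblk n k"
  have e1: "rtil nu n i j (fst (c i j)) (snd (c i j)) = smul ?K (?M (?M ?E (rho (Pblk n i \<times> Pblk n j))) ?E)"
    using h assms(3) by (intro rtil_eq) auto
  have e2: "rtil nu n j k (fst (c j k)) (snd (c j k)) = smul ?K (?M (?M ?E (rho (Pblk n j \<times> Pblk n k))) ?E)"
    using h assms(3) by (intro rtil_eq) auto
  have e3: "rtil nu n i k (fst (c i k)) (snd (c i k)) = smul ?K (?M (?M ?E (rho (Pblk n i \<times> Pblk n k))) ?E)"
    using h assms(3) by (intro rtil_eq) auto
  have rB: "rho B = gadd (rho (Pblk n j \<times> Pblk n k)) (rho (Pblk n i \<times> Pblk n k))"
    unfolding B_def using h by (intro rho_union) (auto simp: Pblk_def)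
  have e23: "gadd (rtil nu n j k (fst (c j k)) (snd (c j k))) (rtil nu n i k (fst (c i k)) (snd (c i k)))
     = smul ?K (?M (?M ?E (rho B)) ?E)"
    unfolding e2 e3 gadd_smul rB gmult_gadd_left gmult_gadd_right ..
  have sB: "stable nu n B" unfolding B_def stable_def
    using h Pblk_Omega[of i nu n] Pblk_Omega[of j nu n] Pblk_Omega[of k nu n] Y_block[of _ nu n] by auto
  have cc: "snd q \<noteq> fst p \<and> snd q \<noteq> snd p \<and> (tr p (fst q), snd q) \<in> B"
    if p: "p \<in> Pblk n i \<times> Pblk n j" and q: "q \<in> B" for p q
  proof -
    obtain a b where pab: "p = (a, b)" "a \<in> Pblk n i" "b \<in> Pblk n j" using p by auto
    obtain x y where qxy: "q = (x, y)" "x \<in> Pblk n j \<union> Pblk n i" "y \<in> Pblk n k" using q unfolding B_def by auto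
    have "fst a = i" "fst b = j" "fst y = k" using pab qxy by (auto dest: Pblk_fst)
    then have ne: "y \<noteq> a" "y \<noteq> b" using h by auto
    have "transpose a b x \<in> Pblk n j \<union> Pblk n i" using qxy pab by (auto simp: transpose_def)
    then show ?thesis using ne pab qxy unfolding B_def tr_def by auto
  qed
  show "gcomm nu n (rtil nu n i j (fst (c i j)) (snd (c i j)))
              (gadd (rtil nu n j k (fst (c j k)) (snd (c j k)))
                    (rtil nu n i k (fst (c i k)) (snd (c i k)))) = (\<lambda>_. 0)"
    unfolding e1 e23 by (rule gcomm_zero, rule X_comm[OF stable_prod sB cc]) (use h in auto)
next
  fix i j k l assume h: "i < nu \<and> j < nu \<and> k < nu \<and> l < nu \<and> distinct [i, j, k, l]"
  let ?E = "EY nu n" and ?M = "gmult nu n"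
  let ?K = "(1 / (\<Prod>j<nu. of_nat (fact (n j)))) * (1 / (\<Prod>j<nu. of_nat (fact (n j))))"
  have e1: "rtil nu n i j (fst (c i j)) (snd (c i j)) = smul ?K (?M (?M ?E (rho (Pblk n i \<times> Pblk n j))) ?E)"
    using h assms(3) by (intro rtil_eq) auto
  have e2: "rtil nu n k l (fst (c k l)) (snd (c k l)) = smul ?K (?M (?M ?E (rho (Pblk n k \<times> Pblk n l))) ?E)"
    using h assms(3) by (intro rtil_eq) auto
  have cc: "snd q \<noteq> fst p \<and> snd q \<noteq> snd p \<and> (tr p (fst q), snd q) \<in> Pblk n k \<times> Pblk n l"
    if p: "p \<in> Pblk n i \<times> Pblk n j" and q: "q \<in> Pblk n k \<times> Pblk n l" for p q
  proof -
    obtain a b where pab: "p = (a, b)" "a \<in> Pblk n i" "b \<in> Pblk n j" using p by auto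
    obtain x y where qxy: "q = (x, y)" "x \<in> Pblk n k" "y \<in> Pblk n l" using q by auto
    have "fst a = i" "fst b = j" "fst x = k" "fst y = l" using pab qxy by (auto dest: Pblk_fst)
    then have ne: "y \<noteq> a" "y \<noteq> b" "x \<noteq> a" "x \<noteq> b" using h by auto
    then show ?thesis using pab qxy unfolding tr_def by auto
  qed
  show "gcomm nu n (rtil nu n i j (fst (c i j)) (snd (c i j)))
              (rtil nu n k l (fst (c k l)) (snd (c k l))) = (\<lambda>_. 0)"
    unfolding e1 e2 by (rule gcomm_zero, rule X_comm[OF stable_prod stable_prod cc]) (use h in auto)
qed

end
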